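(* If $\mathsf{A}=(A_1,\dots,A_N)\in GL_2(\mathbb{R})^N$ is dominated and irreducible, then $\mathsf{A}$ is strongly irreducible.
   Context: For a finite word $\mathtt{i}=i_1\cdots i_n$, $A_{\mathtt{i}}=A_{i_1}\cdots A_{i_n}$ and $|\mathtt{i}|=n$; $\Sigma_*$ is the set of finite words. $\alpha_1\ge\alpha_2$ are singular values. Dominated: there are $C>0$, $0<\tau<1$ with $\alpha_2(A_{\mathtt{i}})\le C\tau^{|\mathtt{i}|}\alpha_1(A_{\mathtt{i}})$ for all $\mathtt{i}\in\Sigma_*$. Irreducible: no line $V$ through the origin has $A_iV=V$ for all $i$. Strongly irreducible: no finite nonempty set $\mathcal{V}$ of lines through the origin satisfies $A_i\mathcal{V}=\mathcal{V}$ for all $i$. *)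

theory Defs
  imports "HOL-Analysis.Analysis"
begin

text \<open>A tuple (A_1,...,A_N) is modelled as A :: nat => real^2^2 restricted to indices i < N.
  Finite words are lists over {..<N}; the product A_w = A_{w1} ... A_{wn}.\<close>

definition word_prod :: "(nat \<Rightarrow> real^2^2) \<Rightarrow> nat list \<Rightarrow> real^2^2" where
  "word_prod A w = foldr (\<lambda>i M. A i ** M) w (mat 1)"

definition sv1 :: "real^2^2 \<Rightarrow> real" where
  "sv1 M = Sup ((\<lambda>x. norm (M *v x)) ` {x. norm x = 1})"

definition sv2 :: "real^2^2 \<Rightarrow> real" where
  "sv2 M = Inf ((\<lambda>x. norm (M *v x)) ` {x. norm x = 1})"

definition dominated :: "nat \<Rightarrow> (nat \<Rightarrow> real^2^2) \<Rightarrow> bool" where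
  "dominated N A \<longleftrightarrow> (\<exists>C::real. \<exists>\<tau>::real. C > 0 \<and> 0 < \<tau> \<and> \<tau> < 1 \<and>
     (\<forall>w. set w \<subseteq> {..<N} \<longrightarrow>
        sv2 (word_prod A w) \<le> C * \<tau> ^ length w * sv1 (word_prod A w)))"

definition is_line :: "(real^2) set \<Rightarrow> bool" where
  "is_line V \<longleftrightarrow> subspace V \<and> dim V = 1"

definition irreducible_tuple :: "nat \<Rightarrow> (nat \<Rightarrow> real^2^2) \<Rightarrow> bool" where
  "irreducible_tuple N A \<longleftrightarrow>
     \<not> (\<exists>V. is_line V \<and> (\<forall>i<N. (\<lambda>x. A i *v x) ` V = V))"

definition strongly_irreducible_tuple :: "nat \<Rightarrow> (nat \<Rightarrow> real^2^2) \<Rightarrow> bool" where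
  "strongly_irreducible_tuple N A \<longleftrightarrow>
     \<not> (\<exists>\<V>. finite \<V> \<and> \<V> \<noteq> {} \<and> (\<forall>V\<in>\<V>. is_line V) \<and>
          (\<forall>i<N. (\<lambda>V. (\<lambda>x. A i *v x) ` V) ` \<V> = \<V>))"

end

theory Submission
  imports Defs
begin

lemma line_rep:
  assumes "is_line V"
  shows "\<exists>v. v \<noteq> 0 \<and> V = range (\<lambda>t. t *\<^sub>R v)"
proof -
  from assms have sV: "subspace V" and dV: "dim V = 1" by (auto simp: is_line_def)
  obtain B where B: "B \<subseteq> V" "independent B" "V \<subseteq> span B" "card B = dim V"
    using basis_exists by blast
  then obtain v where Bv: "B = {v}" using dV card_1_singletonE by metis
  have "v \<noteq> 0" using B(2) Bv dependent_zero by blast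
  moreover have "span B = V" using span_subspace[OF B(1) B(3) sV] .
  ultimately show ?thesis using Bv by (auto simp: span_singleton)
qed

lemma word_rep:
  "word_prod A (replicate k j) *v x = ((\<lambda>x. A j *v x)^^k) x"
  by (induction k arbitrary: x) (auto simp: word_prod_def matrix_vector_mul_assoc[symmetric])

lemma sv_scalar:
  assumes "\<And>x. M *v x = c *\<^sub>R x"
  shows "sv1 M = \<bar>c\<bar> \<and> sv2 M = \<bar>c\<bar>"
proof -
  have ne: "\<exists>x::real^2. norm x = 1" using vector_choose_size[of 1] by auto
  have "(\<lambda>x. norm (M *v x)) ` {x. norm x = 1} = {\<bar>c\<bar>}"
    using ne by (auto simp: assms)
  then show ?thesis by (simp add: sv1_def sv2_def)
qed

theorem mainTheorem10:
  fixes N :: nat and A :: "nat \<Rightarrow> real^2^2"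
  assumes "\<forall>i<N. invertible (A i)"
    and "dominated N A"
    and "irreducible_tuple N A"
  shows "strongly_irreducible_tuple N A"
proof (rule ccontr)
  assume "\<not> strongly_irreducible_tuple N A"
  then obtain \<V> where fin: "finite \<V>" and ne: "\<V> \<noteq> {}" and lines: "\<forall>V\<in>\<V>. is_line V"
    and inv: "\<forall>i<N. (\<lambda>V. (\<lambda>x. A i *v x) ` V) ` \<V> = \<V>"
    unfolding strongly_irreducible_tuple_def by blast
  obtain L where LV: "L \<in> \<V>" using ne by blast
  then have "is_line L" using lines by blast
  then obtain j where j: "j < N" and jL: "(\<lambda>x. A j *v x) ` L \<noteq> L"
    using assms(3) unfolding irreducible_tuple_def by blast
  define g where "g = (\<lambda>x. A j *v x)"
  define f where "f = (\<lambda>V. g ` V)"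
  obtain B where AB: "A j ** B = mat 1" "B ** A j = mat 1"
    using assms(1) j unfolding invertible_def by blast
  have ginj: "inj g"
  proof (rule injI)
    fix x y assume "g x = g y"
    then have "B *v g x = B *v g y" by simp
    then show "x = y" by (simp add: g_def matrix_vector_mul_assoc AB)
  qed
  have finj: "inj f" unfolding f_def using ginj by (simp add: inj_def inj_image_eq_iff)
  have fV: "f ` \<V> = \<V>" using inv j unfolding f_def g_def by blast
  have orb: "(f^^n) L \<in> \<V>" for n
  proof (induction n)
    case 0 then show ?case using LV by simp
  next
    case (Suc n) then show ?case using fV by auto
  qed
  have "\<not> inj (\<lambda>n. (f^^n) L)"
  proof
    assume "inj (\<lambda>n. (f^^n) L)"
    moreover have "finite (range (\<lambda>n. (f^^n) L))"
      using orb fin by (meson finite_subset image_subsetI)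
    ultimately show False using finite_imageD by fastforce
  qed
  then obtain p q where pq: "p \<noteq> q" "(f^^p) L = (f^^q) L" unfolding inj_def by blast
  then obtain p q where pq: "p < q" "(f^^p) L = (f^^q) L"
    by (metis linorder_neq_iff)
  define d where "d = q - p"
  have d1: "d \<ge> 1" using pq by (simp add: d_def)
  have qpd: "q = p + d" using pq by (simp add: d_def)
  have "(f^^p) ((f^^d) L) = (f^^p) L"
    using pq by (simp add: qpd funpow_add)
  then have fdL: "(f^^d) L = L" using inj_fn[OF finj, of p] by (meson injD)
  have fg: "(f^^n) X = (g^^n) ` X" for n X
    by (induction n) (auto simp: f_def image_image)
  obtain v where v0: "v \<noteq> 0" and Lv: "L = range (\<lambda>t. t *\<^sub>R v)"
    using line_rep[OF \<open>is_line L\<close>] by blast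
  have glin: "g (t *\<^sub>R x) = t *\<^sub>R g x" for t x
    by (simp add: g_def matrix_vector_mult_scaleR)
  have "(g^^d) v \<in> L" using fdL fg Lv by (metis rangeI scaleR_one image_eqI)
  then obtain c where cv: "(g^^d) v = c *\<^sub>R v" using Lv by blast
  define u where "u = g v"
  have u_notin: "u \<notin> span {v}"
  proof
    assume "u \<in> span {v}"
    then obtain a where a: "u = a *\<^sub>R v" by (auto simp: span_singleton)
    have "a \<noteq> 0" using a ginj v0 unfolding u_def
      by (metis glin injD scale_zero_left)
    have "g ` L = L"
    proof
      show "g ` L \<subseteq> L" using Lv a glin u_def by auto
      show "L \<subseteq> g ` L"
      proof
        fix y assume "y \<in> L"
        then obtain t where t: "y = t *\<^sub>R v" using Lv by blast
        have "y = g ((t / a) *\<^sub>R v)" using t glin a \<open>a \<noteq> 0\<close> u_def by simp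
        moreover have "(t / a) *\<^sub>R v \<in> L" using Lv by blast
        ultimately show "y \<in> g ` L" by blast
      qed
    qed
    then show False using jL g_def by simp
  qed
  have cu: "(g^^d) u = c *\<^sub>R u"
    unfolding u_def by (metis cv funpow_swap1 glin)
  define M where "M = word_prod A (replicate d j)"
  have Mg: "M *v x = (g^^d) x" for x unfolding M_def g_def by (rule word_rep)
  define S where "S = {x. M *v x = c *\<^sub>R x}"
  have sS: "subspace S" unfolding S_def subspace_def
    by (auto simp: matrix_vector_right_distrib matrix_vector_mult_scaleR scaleR_add_right)
  have indep: "independent {u, v}"
    using u_notin v0 by (simp add: independent_insertI independent_insert)
  have uv: "u \<noteq> v" using u_notin span_base by blast
  have "(UNIV :: (real^2) set) \<subseteq> span {u, v}"
    by (rule card_ge_dim_independent) (use indep uv in auto)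
  moreover have "span {u, v} \<subseteq> S"
    using sS cu cv Mg by (intro span_minimal) (auto simp: S_def)
  ultimately have Mc: "M *v x = c *\<^sub>R x" for x unfolding S_def by blast
  have c0: "c \<noteq> 0"
  proof
    assume "c = 0"
    have g0: "(g^^k) 0 = 0" for k by (induction k) (auto simp: g_def)
    then have "(g^^d) v = (g^^d) 0" using cv \<open>c = 0\<close> by simp
    then show False using inj_fn[OF ginj, of d] v0 by (meson injD)
  qed
  have pow: "word_prod A (replicate (d*n) j) *v x = (c^n) *\<^sub>R x" for n x
  proof -
    have "word_prod A (replicate (d*n) j) *v x = ((g^^d)^^n) x"
      by (simp add: word_rep g_def funpow_mult mult.commute)
    also have "\<dots> = (c^n) *\<^sub>R x"
    proof (induction n)
      case 0 then show ?case by simp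
    next
      case (Suc n) then show ?case using Mc Mg by simp
    qed
    finally show ?thesis .
  qed
  obtain C \<tau> where C: "C > 0" "0 < \<tau>" "\<tau> < 1" and dom:
    "\<forall>w. set w \<subseteq> {..<N} \<longrightarrow> sv2 (word_prod A w) \<le> C * \<tau> ^ length w * sv1 (word_prod A w)"
    using assms(2) unfolding dominated_def by blast
  obtain n where n: "\<tau> ^ n < 1 / C" using real_arch_pow_inv[of "1/C" \<tau>] C by auto
  have "set (replicate (d*n) j) \<subseteq> {..<N}" using j by auto
  then have "\<bar>c^n\<bar> \<le> C * \<tau> ^ (d*n) * \<bar>c^n\<bar>"
    using dom sv_scalar[OF pow[of n]] by fastforce
  moreover have "\<bar>c^n\<bar> > 0" using c0 by simp
  ultimately have "1 \<le> C * \<tau> ^ (d*n)" by simp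
  moreover have "\<tau> ^ (d*n) \<le> \<tau> ^ n" using d1 C by (intro power_decreasing) auto
  ultimately have "1 \<le> C * \<tau> ^ n" using C mult_left_mono[OF \<open>\<tau> ^ (d*n) \<le> \<tau> ^ n\<close>, of C] by linarith
  then show False using n C by (simp add: field_simps)
qed

end
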